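(* Let $\Bbbk$ be a field of characteristic zero and let $n,d$ be integers with $n \geq 5, d \geq 4$, or $n\geq 6, d\geq 3$, or $n \geq 7, d \geq 2$. Let $S=\Bbbk[x_1,\ldots,x_n]$. Then there exists an artinian monomial ideal $I\subset S$ minimally generated by $2n-2$ elements of degree $d$ such that $S/I$ fails the WLP in degree $2d-2$.
   Context: For a monomial ideal $I$, $A=S/I$ fails the WLP in degree $i$ if $\times(x_1+\cdots+x_n): A_i\to A_{i+1}$ is neither injective nor surjective. *)

theory Defs
  imports Main "HOL-Library.Poly_Mapping"
begin

(* Polynomials over a field 'a in the variables x_0, x_1, ... are represented as
  finitely supported maps from exponent vectors (nat \<Rightarrow>\<^sub>0 nat) to coefficients.
  S = k[x_1..x_n] is the subring of polynomials involving only variables x_j with j < n. *)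

type_synonym 'a mpoly = "(nat \<Rightarrow>\<^sub>0 nat) \<Rightarrow>\<^sub>0 'a"

definition mdeg :: "(nat \<Rightarrow>\<^sub>0 nat) \<Rightarrow> nat" where
  "mdeg m = (\<Sum>j\<in>Poly_Mapping.keys m. Poly_Mapping.lookup m j)"

definition polyS :: "nat \<Rightarrow> 'a::comm_ring_1 mpoly set" where
  "polyS n = {p. \<forall>m\<in>Poly_Mapping.keys p. Poly_Mapping.keys m \<subseteq> {..<n}}"

definition homog :: "nat \<Rightarrow> nat \<Rightarrow> 'a::comm_ring_1 mpoly set" where
  "homog n i = {p \<in> polyS n. \<forall>m\<in>Poly_Mapping.keys p. mdeg m = i}"

definition var :: "nat \<Rightarrow> 'a::comm_ring_1 mpoly" where
  "var j = Poly_Mapping.single (Poly_Mapping.single j 1) 1"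

definition monom :: "(nat \<Rightarrow>\<^sub>0 nat) \<Rightarrow> 'a::comm_ring_1 mpoly" where
  "monom m = Poly_Mapping.single m 1"

definition const :: "'a::comm_ring_1 \<Rightarrow> 'a mpoly" where
  "const c = Poly_Mapping.single 0 c"

definition ideal_gen :: "nat \<Rightarrow> 'a::comm_ring_1 mpoly set \<Rightarrow> 'a mpoly set" where
  "ideal_gen n H = {p. \<exists>q. (\<forall>h\<in>H. q h \<in> polyS n) \<and> p = (\<Sum>h\<in>H. q h * h)}"

(* S/I is artinian, i.e. finite dimensional over the field: there is a finite set B
  whose classes span S/I. *)
definition artinian_quot :: "nat \<Rightarrow> 'a::field mpoly set \<Rightarrow> bool" where
  "artinian_quot n I \<longleftrightarrow> (\<exists>B. finite B \<and> B \<subseteq> polyS n \<and>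
     (\<forall>p\<in>polyS n. \<exists>c. p - (\<Sum>b\<in>B. const (c b) * b) \<in> I))"

definition lin_form :: "nat \<Rightarrow> 'a::comm_ring_1 mpoly" where
  "lin_form n = (\<Sum>j<n. var j)"

definition mult_injective :: "nat \<Rightarrow> 'a::field mpoly set \<Rightarrow> nat \<Rightarrow> bool" where
  "mult_injective n I i \<longleftrightarrow> (\<forall>f\<in>homog n i. lin_form n * f \<in> I \<longrightarrow> f \<in> I)"

definition mult_surjective :: "nat \<Rightarrow> 'a::field mpoly set \<Rightarrow> nat \<Rightarrow> bool" where
  "mult_surjective n I i \<longleftrightarrow> (\<forall>g\<in>homog n (Suc i). \<exists>f\<in>homog n i. g - lin_form n * f \<in> I)"

definition fails_WLP_in_degree :: "nat \<Rightarrow> 'a::field mpoly set \<Rightarrow> nat \<Rightarrow> bool" where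
  "fails_WLP_in_degree n I i \<longleftrightarrow> \<not> mult_injective n I i \<and> \<not> mult_surjective n I i"

end

theory Submission
  imports Defs Complex_Main "HOL-Library.Function_Algebras" "HOL-Library.FuncSet"
begin


lemma poly_expand: "p = (\<Sum>k\<in>Poly_Mapping.keys p. Poly_Mapping.single k (Poly_Mapping.lookup p k))"
proof (rule poly_mapping_eqI)
  fix x
  show "Poly_Mapping.lookup p x = Poly_Mapping.lookup (\<Sum>k\<in>Poly_Mapping.keys p. Poly_Mapping.single k (Poly_Mapping.lookup p k)) x"
    by (simp add: lookup_sum lookup_single when_def in_keys_iff)
qed

lemma lookup_mult_single_gen:
  fixes A :: "('k::cancel_comm_monoid_add \<Rightarrow>\<^sub>0 'a::comm_ring_1)"
  shows "Poly_Mapping.lookup (A * Poly_Mapping.single m c) x =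
    (if (\<exists>k. x = k + m) then Poly_Mapping.lookup A (x - m) * c else 0)"
proof -
  have "A * Poly_Mapping.single m c = (\<Sum>k\<in>Poly_Mapping.keys A. Poly_Mapping.single k (Poly_Mapping.lookup A k) * Poly_Mapping.single m c)"
    by (subst poly_expand[of A]) (simp add: sum_distrib_right)
  also have "\<dots> = (\<Sum>k\<in>Poly_Mapping.keys A. Poly_Mapping.single (k + m) (Poly_Mapping.lookup A k * c))"
    by (simp add: mult_single)
  finally have eq: "Poly_Mapping.lookup (A * Poly_Mapping.single m c) x =
     (\<Sum>k\<in>Poly_Mapping.keys A. if k + m = x then Poly_Mapping.lookup A k * c else 0)"
    by (simp add: lookup_sum lookup_single when_def)
  show ?thesis
  proof (cases "\<exists>k. x = k + m")
    case True
    then obtain k where k: "x = k + m" by blast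
    have "(\<Sum>k'\<in>Poly_Mapping.keys A. if k' + m = x then Poly_Mapping.lookup A k' * c else 0)
        = (\<Sum>k'\<in>Poly_Mapping.keys A. if k' = k then Poly_Mapping.lookup A k' * c else 0)"
      by (rule sum.cong) (auto simp: k)
    also have "\<dots> = Poly_Mapping.lookup A k * c"
      by (auto simp: in_keys_iff)
    finally show ?thesis using eq True k by simp
  next
    case False
    then show ?thesis using eq by (auto intro!: sum.neutral)
  qed
qed

lemma lookup_mult_single_shift:
  fixes A :: "('k::cancel_comm_monoid_add \<Rightarrow>\<^sub>0 'a::comm_ring_1)"
  shows "Poly_Mapping.lookup (A * Poly_Mapping.single m c) (k + m) = Poly_Mapping.lookup A k * c"
  by (simp add: lookup_mult_single_gen)

lemma lookup_mult_single_none: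
  fixes A :: "('k::cancel_comm_monoid_add \<Rightarrow>\<^sub>0 'a::comm_ring_1)"
  shows "\<not> (\<exists>k. x = k + m) \<Longrightarrow> Poly_Mapping.lookup (A * Poly_Mapping.single m c) x = 0"
  by (simp add: lookup_mult_single_gen)

lemma pm_add_eq_0:
  assumes "(a::nat \<Rightarrow>\<^sub>0 nat) + b = 0" shows "b = 0"
proof (rule poly_mapping_eqI)
  fix j
  have "Poly_Mapping.lookup (a + b) j = 0" using assms by simp
  thus "Poly_Mapping.lookup b j = Poly_Mapping.lookup 0 j" by (simp add: lookup_add)
qed

lemma lookup_mult_zero:
  fixes A B :: "'a::comm_ring_1 mpoly"
  shows "Poly_Mapping.lookup (A * B) 0 = Poly_Mapping.lookup A 0 * Poly_Mapping.lookup B 0"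
proof -
  have "A * B = (\<Sum>k\<in>Poly_Mapping.keys B. A * Poly_Mapping.single k (Poly_Mapping.lookup B k))"
    by (subst poly_expand[of B]) (simp add: sum_distrib_left)
  hence "Poly_Mapping.lookup (A * B) 0 = (\<Sum>k\<in>Poly_Mapping.keys B. Poly_Mapping.lookup (A * Poly_Mapping.single k (Poly_Mapping.lookup B k)) 0)"
    by (simp add: lookup_sum)
  also have "\<dots> = (\<Sum>k\<in>Poly_Mapping.keys B. if k = 0 then Poly_Mapping.lookup A 0 * Poly_Mapping.lookup B 0 else 0)"
  proof (rule sum.cong[OF refl])
    fix k
    show "Poly_Mapping.lookup (A * Poly_Mapping.single k (Poly_Mapping.lookup B k)) 0 =
          (if k = 0 then Poly_Mapping.lookup A 0 * Poly_Mapping.lookup B 0 else 0)"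
    proof (cases "k = 0")
      case True
      then show ?thesis using lookup_mult_single_shift[of A k "Poly_Mapping.lookup B k" 0] by simp
    next
      case False
      have "\<not> (\<exists>x. (0::nat \<Rightarrow>\<^sub>0 nat) = x + k)" using False pm_add_eq_0 by metis
      then show ?thesis using False by (simp add: lookup_mult_single_none)
    qed
  qed
  also have "\<dots> = (if 0 \<in> Poly_Mapping.keys B then Poly_Mapping.lookup A 0 * Poly_Mapping.lookup B 0 else 0)"
    by (rule sum.delta) simp
  also have "\<dots> = Poly_Mapping.lookup A 0 * Poly_Mapping.lookup B 0"
    by (simp add: in_keys_iff)
  finally show ?thesis .
qed

lemma keys_add_nat: "Poly_Mapping.keys ((a::nat \<Rightarrow>\<^sub>0 nat) + b) = Poly_Mapping.keys a \<union> Poly_Mapping.keys b"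
  by (auto simp: in_keys_iff lookup_add)

lemma mdeg_alt: "finite K \<Longrightarrow> Poly_Mapping.keys m \<subseteq> K \<Longrightarrow> mdeg m = (\<Sum>j\<in>K. Poly_Mapping.lookup m j)"
  unfolding mdeg_def by (rule sum.mono_neutral_left) (auto simp: in_keys_iff)

lemma mdeg_add: "mdeg (a + b) = mdeg a + mdeg b"
proof -
  let ?K = "Poly_Mapping.keys a \<union> Poly_Mapping.keys b"
  have "mdeg (a+b) = (\<Sum>j\<in>?K. Poly_Mapping.lookup (a+b) j)"
    by (rule mdeg_alt) (auto simp: keys_add_nat)
  also have "\<dots> = (\<Sum>j\<in>?K. Poly_Mapping.lookup a j) + (\<Sum>j\<in>?K. Poly_Mapping.lookup b j)"
    by (simp add: lookup_add sum.distrib)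
  also have "\<dots> = mdeg a + mdeg b"
    by (simp add: mdeg_alt[symmetric])
  finally show ?thesis .
qed

lemma mdeg_single[simp]: "mdeg (Poly_Mapping.single j k) = k"
  unfolding mdeg_def by auto

lemma mdeg_zero_iff: "mdeg c = 0 \<longleftrightarrow> c = 0"
proof
  assume "mdeg c = 0"
  hence "\<forall>j\<in>Poly_Mapping.keys c. Poly_Mapping.lookup c j = 0"
    unfolding mdeg_def by simp
  thus "c = 0" by (intro poly_mapping_eqI) (metis in_keys_iff lookup_zero)
qed (simp add: mdeg_def)

lemma mdeg_zero[simp]: "mdeg 0 = 0" by (simp add: mdeg_zero_iff)

lemma monom_inj: "monom a = (monom b :: 'a::comm_ring_1 mpoly) \<longleftrightarrow> a = b"
proof
  assume "monom a = (monom b :: 'a mpoly)"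
  hence "Poly_Mapping.lookup (monom a :: 'a mpoly) a = Poly_Mapping.lookup (monom b :: 'a mpoly) a" by simp
  thus "a = b" unfolding monom_def by (simp add: lookup_single when_def split: if_splits)
qed simp

lemma keys_monom[simp]: "Poly_Mapping.keys (monom m :: 'a::comm_ring_1 mpoly) = {m}"
  unfolding monom_def by simp


lemma sum_fun_apply: "(\<Sum>b\<in>B. f b) x = (\<Sum>b\<in>B. f b x)"
  by (induction B rule: infinite_finite_induct) auto

lemma rank_bound:
  fixes C :: "'x \<Rightarrow> 'y \<Rightarrow> 'a::field" and V :: "'y \<Rightarrow> 'x \<Rightarrow> 'a"
  assumes fA: "finite A" and fB: "finite B"
    and id: "\<And>a a'. a \<in> A \<Longrightarrow> a' \<in> A \<Longrightarrow> (\<Sum>b\<in>B. C a b * V b a') = (if a = a' then 1 else 0)"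
  shows "card A \<le> card B"
proof -
  interpret VS: vector_space "\<lambda>(c::'a) (f::'x \<Rightarrow> 'a) x. c * f x"
    by unfold_locales (auto simp: algebra_simps fun_eq_iff)
  define w where "w b = (\<lambda>x. if x \<in> A then V b x else 0)" for b
  define e where "e a = (\<lambda>x::'x. if x = a then (1::'a) else 0)" for a
  have sp: "e ` A \<subseteq> VS.span (w ` B)"
  proof
    fix v assume "v \<in> e ` A"
    then obtain a where a: "a \<in> A" "v = e a" by auto
    have "e a = (\<Sum>b\<in>B. (\<lambda>x. C a b * w b x))"
    proof
      fix x
      show "e a x = (\<Sum>b\<in>B. (\<lambda>x. C a b * w b x)) x"
        using id[OF a(1)] a(1) by (cases "x \<in> A") (auto simp: e_def w_def sum_fun_apply)
    qed
    also have "\<dots> \<in> VS.span (w ` B)"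
      by (intro VS.span_sum VS.span_scale VS.span_base) auto
    finally show "v \<in> VS.span (w ` B)" using a by simp
  qed
  have ind: "VS.independent (e ` A)"
    unfolding VS.independent_explicit_module
  proof (intro allI impI)
    fix t u v assume h: "finite t" "t \<subseteq> e ` A" "(\<Sum>v\<in>t. (\<lambda>x. u v * v x)) = 0" "v \<in> t"
    then obtain a where a: "a \<in> A" "v = e a" by auto
    have "(\<Sum>v\<in>t. (\<lambda>x. u v * v x)) a = 0" using h(3) by simp
    hence "(\<Sum>v'\<in>t. u v' * v' a) = 0" by (simp add: sum_fun_apply)
    moreover have "(\<Sum>v'\<in>t. u v' * v' a) = u v"
    proof -
      have "(\<Sum>v'\<in>t. u v' * v' a) = (\<Sum>v'\<in>t. if v' = v then u v else 0)"
      proof (rule sum.cong[OF refl])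
        fix v' assume "v' \<in> t"
        then obtain a' where "a' \<in> A" "v' = e a'" using h(2) by auto
        thus "u v' * v' a = (if v' = v then u v else 0)"
          using a by (cases "a' = a") (auto simp: e_def dest: fun_cong[where x=a])
      qed
      also have "\<dots> = u v" using h(1,4) by simp
      finally show ?thesis .
    qed
    ultimately show "u v = 0" by simp
  qed
  have "card (e ` A) \<le> card (w ` B)"
    using VS.independent_span_bound[OF finite_imageI[OF fB] ind sp] by simp
  moreover have "card (e ` A) = card A"
    by (rule card_image) (auto simp: inj_on_def e_def fun_eq_iff)
  moreover have "card (w ` B) \<le> card B" by (rule card_image_le[OF fB])
  ultimately show ?thesis by simp
qed

lemma ideal_keys:
  assumes fM: "finite M" and p: "p \<in> ideal_gen n (monom ` M :: 'a::comm_ring_1 mpoly set)"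
    and k: "k \<in> Poly_Mapping.keys p"
  shows "\<exists>m\<in>M. \<exists>c. k = c + m"
proof -
  obtain q where q: "p = (\<Sum>h\<in>monom ` M. q h * h)" using p unfolding ideal_gen_def by blast
  have "Poly_Mapping.keys p \<subseteq> (\<Union>h\<in>monom ` M. Poly_Mapping.keys (q h * h))"
    by (subst q) (rule keys_sum)
  with k obtain h where h: "h \<in> monom ` M" "k \<in> Poly_Mapping.keys (q h * h)" by blast
  from h(1) obtain m where m: "m \<in> M" "h = monom m" by blast
  have "k \<in> {a + b | a b. a \<in> Poly_Mapping.keys (q h) \<and> b \<in> Poly_Mapping.keys h}"
    using keys_mult[of "q h" h] h(2) by blast
  then obtain a where "k = a + m" using m(2) by auto
  thus ?thesis using m(1) by blast
qed

lemma keys_sub_add: "Poly_Mapping.keys (c :: nat \<Rightarrow>\<^sub>0 nat) \<subseteq> Poly_Mapping.keys (c + m)"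
  by (simp add: keys_add_nat)

lemma ideal_mem:
  assumes fM: "finite M" and p: "p \<in> polyS n"
    and cov: "\<forall>k\<in>Poly_Mapping.keys p. \<exists>m\<in>M. \<exists>c. k = c + m"
  shows "p \<in> ideal_gen n (monom ` M :: 'a::comm_ring_1 mpoly set)"
proof -
  have "\<forall>k\<in>Poly_Mapping.keys p. \<exists>mc. fst mc \<in> M \<and> snd mc + fst mc = k"
  proof
    fix k assume "k \<in> Poly_Mapping.keys p"
    then obtain m c where "m \<in> M" "k = c + m" using cov by blast
    hence "fst (m, c) \<in> M \<and> snd (m, c) + fst (m, c) = k" by simp
    thus "\<exists>mc. fst mc \<in> M \<and> snd mc + fst mc = k" by (rule exI)
  qed
  hence "\<exists>f. \<forall>k\<in>Poly_Mapping.keys p. fst (f k) \<in> M \<and> snd (f k) + fst (f k) = k"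
    by (rule bchoice)
  then obtain f where f: "\<forall>k\<in>Poly_Mapping.keys p. fst (f k) \<in> M \<and> snd (f k) + fst (f k) = k"
    by blast
  define q where "q h = (\<Sum>k\<in>{k \<in> Poly_Mapping.keys p. monom (fst (f k)) = h}.
       Poly_Mapping.single (snd (f k)) (Poly_Mapping.lookup p k) :: 'a mpoly)" for h :: "'a mpoly"
  have qS: "q h \<in> polyS n" for h
  proof -
    have "Poly_Mapping.keys (q h) \<subseteq> (\<Union>k\<in>{k \<in> Poly_Mapping.keys p. monom (fst (f k)) = h}.
       Poly_Mapping.keys (Poly_Mapping.single (snd (f k)) (Poly_Mapping.lookup p k) :: 'a mpoly))"
      unfolding q_def by (rule keys_sum)
    moreover have "\<forall>k\<in>Poly_Mapping.keys p. Poly_Mapping.keys (snd (f k)) \<subseteq> {..<n}"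
    proof
      fix k assume kk: "k \<in> Poly_Mapping.keys p"
      have "Poly_Mapping.keys (snd (f k)) \<subseteq> Poly_Mapping.keys k"
        using f kk keys_sub_add[of "snd (f k)" "fst (f k)"] by simp
      also have "\<dots> \<subseteq> {..<n}" using p kk unfolding polyS_def by auto
      finally show "Poly_Mapping.keys (snd (f k)) \<subseteq> {..<n}" .
    qed
    ultimately show ?thesis unfolding polyS_def by (auto split: if_splits)
  qed
  have "(\<Sum>h\<in>(monom ` M :: 'a mpoly set). q h * h) = (\<Sum>h\<in>(monom ` M :: 'a mpoly set). \<Sum>k\<in>{k \<in> Poly_Mapping.keys p. monom (fst (f k)) = h}.
       Poly_Mapping.single k (Poly_Mapping.lookup p k))"
  proof (rule sum.cong[OF refl])
    fix h :: "'a mpoly" assume "h \<in> monom ` M"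
    have "q h * h = (\<Sum>k\<in>{k \<in> Poly_Mapping.keys p. monom (fst (f k)) = h}.
       Poly_Mapping.single (snd (f k)) (Poly_Mapping.lookup p k) * h)"
      unfolding q_def by (simp add: sum_distrib_right)
    also have "\<dots> = (\<Sum>k\<in>{k \<in> Poly_Mapping.keys p. monom (fst (f k)) = h}.
       Poly_Mapping.single k (Poly_Mapping.lookup p k))"
    proof (rule sum.cong[OF refl])
      fix k assume kk: "k \<in> {k \<in> Poly_Mapping.keys p. monom (fst (f k)) = h}"
      hence "Poly_Mapping.single (snd (f k)) (Poly_Mapping.lookup p k) * h
          = Poly_Mapping.single (snd (f k) + fst (f k)) (Poly_Mapping.lookup p k)"
        by (auto simp: monom_def mult_single)
      also have "\<dots> = Poly_Mapping.single k (Poly_Mapping.lookup p k)" using f kk by auto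
      finally show "Poly_Mapping.single (snd (f k)) (Poly_Mapping.lookup p k) * h =
          Poly_Mapping.single k (Poly_Mapping.lookup p k)"
        by simp
    qed
    finally show "q h * h = (\<Sum>k\<in>{k \<in> Poly_Mapping.keys p. monom (fst (f k)) = h}.
       Poly_Mapping.single k (Poly_Mapping.lookup p k))" .
  qed
  also have "\<dots> = (\<Sum>k\<in>Poly_Mapping.keys p. Poly_Mapping.single k (Poly_Mapping.lookup p k))"
    by (rule sum.group) (use fM f in auto)
  also have "\<dots> = p" by (simp add: poly_expand[symmetric])
  finally show ?thesis unfolding ideal_gen_def using qS by (intro CollectI exI[of _ q]) auto
qed

definition Psi :: "((nat \<Rightarrow>\<^sub>0 nat) \<Rightarrow> 'a::comm_ring_1) \<Rightarrow> 'a mpoly \<Rightarrow> 'a" where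
  "Psi \<psi> p = (\<Sum>k\<in>Poly_Mapping.keys p. Poly_Mapping.lookup p k * \<psi> k)"

lemma Psi_add: "Psi \<psi> (p + q) = Psi \<psi> p + Psi \<psi> q"
  unfolding Psi_def by (rule setsum_keys_plus_distrib) (auto simp: algebra_simps)

lemma Psi_zero[simp]: "Psi \<psi> 0 = 0" unfolding Psi_def by simp

lemma Psi_uminus: "Psi \<psi> (- p) = - Psi \<psi> p"
  unfolding Psi_def by (simp add: sum_negf)

lemma Psi_diff: "Psi \<psi> (p - q) = Psi \<psi> p - Psi \<psi> q"
  using Psi_add[of \<psi> p "-q"] Psi_uminus[of \<psi> q] by simp

lemma Psi_sum: "Psi \<psi> (\<Sum>i\<in>I. f i) = (\<Sum>i\<in>I. Psi \<psi> (f i))"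
  by (induction I rule: infinite_finite_induct) (auto simp: Psi_add)

lemma Psi_single: "Psi \<psi> (Poly_Mapping.single k c) = c * \<psi> k"
  unfolding Psi_def by auto

lemma Psi_ideal:
  assumes fM: "finite M" and van: "\<forall>m\<in>M. \<forall>c. \<psi> (c + m) = 0"
    and p: "p \<in> ideal_gen n (monom ` M)"
  shows "Psi \<psi> p = 0"
  unfolding Psi_def
proof (rule sum.neutral, rule ballI)
  fix k assume "k \<in> Poly_Mapping.keys p"
  then obtain m c where "m \<in> M" "k = c + m" using ideal_keys[OF fM p] by blast
  thus "Poly_Mapping.lookup p k * \<psi> k = 0" using van by simp
qed

lemma Psi_lin:
  assumes van: "\<And>u. (\<Sum>j<n. \<psi> (u + Poly_Mapping.single j 1)) = 0"
  shows "Psi \<psi> (lin_form n * f) = 0"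
proof -
  have "lin_form n * f = (\<Sum>j<n. var j * f)"
    unfolding lin_form_def by (simp add: sum_distrib_right)
  also have "\<dots> = (\<Sum>j<n. \<Sum>k\<in>Poly_Mapping.keys f. var j * Poly_Mapping.single k (Poly_Mapping.lookup f k))"
  proof (rule sum.cong[OF refl])
    fix j
    show "var j * f = (\<Sum>k\<in>Poly_Mapping.keys f. var j * Poly_Mapping.single k (Poly_Mapping.lookup f k))"
      by (subst (1) poly_expand[of f]) (simp add: sum_distrib_left)
  qed
  also have "\<dots> = (\<Sum>j<n. \<Sum>k\<in>Poly_Mapping.keys f. Poly_Mapping.single (k + Poly_Mapping.single j 1) (Poly_Mapping.lookup f k))"
    unfolding var_def by (simp add: mult_single add.commute)
  finally have "Psi \<psi> (lin_form n * f) = (\<Sum>j<n. \<Sum>k\<in>Poly_Mapping.keys f. Poly_Mapping.lookup f k * \<psi> (k + Poly_Mapping.single j 1))"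
    by (simp add: Psi_sum Psi_single)
  also have "\<dots> = (\<Sum>k\<in>Poly_Mapping.keys f. Poly_Mapping.lookup f k * (\<Sum>j<n. \<psi> (k + Poly_Mapping.single j 1)))"
    by (subst sum.swap) (simp add: sum_distrib_left)
  also have "\<dots> = 0" using van by simp
  finally show ?thesis .
qed

lemma not_surj:
  fixes \<psi> :: "(nat \<Rightarrow>\<^sub>0 nat) \<Rightarrow> 'a::field"
  assumes fM: "finite M" and van: "\<forall>m\<in>M. \<forall>c. \<psi> (c + m) = 0"
    and lin: "\<And>u. (\<Sum>j<n. \<psi> (u + Poly_Mapping.single j 1)) = 0"
    and g0: "Poly_Mapping.keys g0 \<subseteq> {..<n}" "mdeg g0 = Suc i" "\<psi> g0 \<noteq> 0"
  shows "\<not> mult_surjective n (ideal_gen n (monom ` M :: 'a mpoly set)) i"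
proof
  assume "mult_surjective n (ideal_gen n (monom ` M :: 'a mpoly set)) i"
  moreover have "(monom g0 :: 'a mpoly) \<in> homog n (Suc i)"
    using g0 unfolding homog_def polyS_def by auto
  ultimately obtain f where "(monom g0 :: 'a mpoly) - lin_form n * f \<in> ideal_gen n (monom ` M)"
    unfolding mult_surjective_def by blast
  hence "Psi \<psi> ((monom g0 :: 'a mpoly) - lin_form n * f) = 0" by (rule Psi_ideal[OF fM van])
  hence "Psi \<psi> (monom g0 :: 'a mpoly) = 0" by (simp add: Psi_diff Psi_lin[OF lin])
  thus False using g0 by (simp add: monom_def Psi_single)
qed

lemma not_inj:
  assumes fM: "finite M" and u: "Poly_Mapping.keys u \<subseteq> {..<n}" "mdeg u = i"
    and notin: "\<not> (\<exists>m\<in>M. \<exists>c. u = c + m)"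
    and soc: "\<forall>j<n. \<exists>m\<in>M. \<exists>c. u + Poly_Mapping.single j 1 = c + m"
  shows "\<not> mult_injective n (ideal_gen n (monom ` M :: 'a::field mpoly set)) i"
proof
  assume inj: "mult_injective n (ideal_gen n (monom ` M :: 'a::field mpoly set)) i"
  have h: "monom u \<in> homog n i" using u unfolding homog_def polyS_def by auto
  have L: "lin_form n * monom u = (\<Sum>j<n. monom (u + Poly_Mapping.single j 1) :: 'a mpoly)"
    unfolding lin_form_def var_def monom_def by (simp add: sum_distrib_right mult_single add.commute)
  have kL: "Poly_Mapping.keys (lin_form n * monom u :: 'a mpoly) \<subseteq> (\<Union>j<n. {u + Poly_Mapping.single j 1})"
    unfolding L using keys_sum[of "\<lambda>j. monom (u + Poly_Mapping.single j 1) :: 'a mpoly" "{..<n}"] by simp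
  have "(lin_form n * monom u :: 'a mpoly) \<in> polyS n"
    unfolding polyS_def
  proof (intro CollectI ballI)
    fix k assume "k \<in> Poly_Mapping.keys (lin_form n * monom u :: 'a mpoly)"
    then obtain j where "j < n" "k = u + Poly_Mapping.single j 1" using kL by blast
    thus "Poly_Mapping.keys k \<subseteq> {..<n}" using u by (auto simp: keys_add_nat)
  qed
  moreover have "\<forall>k\<in>Poly_Mapping.keys (lin_form n * monom u :: 'a mpoly). \<exists>m\<in>M. \<exists>c. k = c + m"
    using kL soc by blast
  ultimately have "lin_form n * monom u \<in> ideal_gen n (monom ` M :: 'a mpoly set)"
    by (rule ideal_mem[OF fM])
  hence "monom u \<in> ideal_gen n (monom ` M :: 'a mpoly set)" using inj h unfolding mult_injective_def by blast
  thus False using ideal_keys[OF fM, of "monom u" n u] notin by auto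
qed



lemma gen_in_ideal:
  assumes "finite H" "h \<in> H"
  shows "h \<in> ideal_gen n (H :: 'a::comm_ring_1 mpoly set)"
proof -
  have p1: "(1 :: 'a mpoly) \<in> polyS n" and p0: "(0 :: 'a mpoly) \<in> polyS n"
    unfolding polyS_def by auto
  have "(\<Sum>h'\<in>H. (if h' = h then 1 else 0) * h') = (\<Sum>h'\<in>H. if h' = h then h else 0)"
    by (rule sum.cong) auto
  also have "\<dots> = h" using assms by (simp add: sum.delta')
  finally have "(\<Sum>h'\<in>H. (if h' = h then 1 else 0) * h') = h" .
  moreover have "\<forall>h'\<in>H. (if h' = h then 1 else (0 :: 'a mpoly)) \<in> polyS n" using p1 p0 by auto
  ultimately show ?thesis unfolding ideal_gen_def
    by (intro CollectI exI[of _ "\<lambda>h'. if h' = h then 1 else (0 :: 'a mpoly)"]) auto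
qed

lemma coeff_gen:
  fixes Q :: "'a::comm_ring_1 mpoly \<Rightarrow> 'a mpoly"
  assumes fM: "finite M" and anti: "\<And>m m' c. m \<in> M \<Longrightarrow> m' \<in> M \<Longrightarrow> m' = c + m \<Longrightarrow> m' = m"
    and m': "m' \<in> M"
  shows "Poly_Mapping.lookup (\<Sum>h\<in>monom ` M. Q h * h) m' = Poly_Mapping.lookup (Q (monom m')) 0"
proof -
  have inj: "inj_on (monom :: _ \<Rightarrow> 'a mpoly) M" by (auto simp: inj_on_def monom_inj)
  have "(\<Sum>h\<in>monom ` M. Q h * h) = (\<Sum>m\<in>M. Q (monom m) * monom m)"
    by (simp add: sum.reindex[OF inj])
  hence "Poly_Mapping.lookup (\<Sum>h\<in>monom ` M. Q h * h) m' =
      (\<Sum>m\<in>M. Poly_Mapping.lookup (Q (monom m) * Poly_Mapping.single m 1) m')"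
    by (simp add: lookup_sum monom_def)
  also have "\<dots> = (\<Sum>m\<in>M. if m = m' then Poly_Mapping.lookup (Q (monom m')) 0 else 0)"
  proof (rule sum.cong[OF refl])
    fix m assume mM: "m \<in> M"
    show "Poly_Mapping.lookup (Q (monom m) * Poly_Mapping.single m 1) m' =
        (if m = m' then Poly_Mapping.lookup (Q (monom m')) 0 else 0)"
    proof (cases "m = m'")
      case True
      then show ?thesis using lookup_mult_single_shift[of "Q (monom m)" m 1 0] by simp
    next
      case False
      have "\<not> (\<exists>k. m' = k + m)" using anti[OF mM m'] False by metis
      then show ?thesis using False by (simp add: lookup_mult_single_none)
    qed
  qed
  also have "\<dots> = Poly_Mapping.lookup (Q (monom m')) 0"
    using fM m' by (simp add: sum.delta')
  finally show ?thesis .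
qed

lemma min_gens:
  fixes M :: "(nat \<Rightarrow>\<^sub>0 nat) set"
  assumes fM: "finite M" and anti: "\<And>m m' c. m \<in> M \<Longrightarrow> m' \<in> M \<Longrightarrow> m' = c + m \<Longrightarrow> m' = m"
    and fH: "finite H" and eq: "ideal_gen n H = ideal_gen n (monom ` M :: 'a::field mpoly set)"
  shows "card M \<le> card H"
proof -
  have "\<forall>m\<in>M. \<exists>r. (\<forall>h\<in>H. r h \<in> polyS n) \<and> monom m = (\<Sum>h\<in>H. r h * h)"
  proof
    fix m assume "m \<in> M"
    hence "(monom m :: 'a mpoly) \<in> ideal_gen n (monom ` M)" using fM by (intro gen_in_ideal) auto
    hence "(monom m :: 'a mpoly) \<in> ideal_gen n H" using eq by simp
    thus "\<exists>r. (\<forall>h\<in>H. r h \<in> polyS n) \<and> monom m = (\<Sum>h\<in>H. r h * h)"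
      unfolding ideal_gen_def by blast
  qed
  hence "\<exists>R. \<forall>m\<in>M. (\<forall>h\<in>H. R m h \<in> polyS n) \<and> monom m = (\<Sum>h\<in>H. R m h * h)"
    by (rule bchoice)
  then obtain R where R: "\<And>m. m \<in> M \<Longrightarrow> monom m = (\<Sum>h\<in>H. R m h * h)" by blast
  have "\<forall>h\<in>H. \<exists>Q. h = (\<Sum>g\<in>monom ` M. Q g * g)"
  proof
    fix h assume "h \<in> H"
    hence "h \<in> ideal_gen n H" using fH by (intro gen_in_ideal) auto
    hence "h \<in> ideal_gen n (monom ` M)" using eq by simp
    thus "\<exists>Q. h = (\<Sum>g\<in>monom ` M. Q g * g)" unfolding ideal_gen_def by blast
  qed
  hence "\<exists>QH. \<forall>h\<in>H. h = (\<Sum>g\<in>monom ` M. QH h g * g)" by (rule bchoice)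
  then obtain QH where QH: "\<And>h. h \<in> H \<Longrightarrow> h = (\<Sum>g\<in>monom ` M. QH h g * g)" by blast
  show ?thesis
  proof (rule rank_bound[OF fM fH])
    fix m m' assume m: "m \<in> M" and m': "m' \<in> M"
    have "(if m = m' then 1 else 0) = Poly_Mapping.lookup (monom m :: 'a mpoly) m'"
      by (simp add: monom_def lookup_single when_def)
    also have "\<dots> = (\<Sum>h\<in>H. Poly_Mapping.lookup (R m h * h) m')"
      using R[OF m] by (simp add: lookup_sum)
    also have "\<dots> = (\<Sum>h\<in>H. Poly_Mapping.lookup (R m h) 0 * Poly_Mapping.lookup h m')"
    proof (rule sum.cong[OF refl])
      fix h assume h: "h \<in> H"
      have "R m h * h = (\<Sum>g\<in>monom ` M. (R m h * QH h g) * g)"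
        by (subst QH[OF h]) (simp add: sum_distrib_left mult.assoc)
      hence "Poly_Mapping.lookup (R m h * h) m' = Poly_Mapping.lookup (R m h * QH h (monom m')) 0"
        using coeff_gen[OF fM anti m', where Q="\<lambda>g. R m h * QH h g"] by simp
      also have "\<dots> = Poly_Mapping.lookup (R m h) 0 * Poly_Mapping.lookup (QH h (monom m')) 0"
        by (rule lookup_mult_zero)
      also have "Poly_Mapping.lookup (QH h (monom m')) 0 = Poly_Mapping.lookup h m'"
        using coeff_gen[OF fM anti m', where Q="QH h"] QH[OF h] by simp
      finally show "Poly_Mapping.lookup (R m h * h) m' = Poly_Mapping.lookup (R m h) 0 * Poly_Mapping.lookup h m'" .
    qed
    finally show "(\<Sum>h\<in>H. Poly_Mapping.lookup (R m h) 0 * Poly_Mapping.lookup h m') = (if m = m' then 1 else 0)"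
      by simp
  qed
qed

definition wt :: "nat set \<Rightarrow> (nat \<Rightarrow>\<^sub>0 nat) \<Rightarrow> nat" where
  "wt S k = (\<Sum>s\<in>S. Poly_Mapping.lookup k s)"

lemma wt_add: "wt S (a + b) = wt S a + wt S b"
  unfolding wt_def by (simp add: lookup_add sum.distrib)

lemma wt_zero[simp]: "wt S 0 = 0" unfolding wt_def by simp

lemma keys_power_wt:
  fixes l :: "'a::comm_ring_1 mpoly"
  assumes "Poly_Mapping.keys l \<subseteq> {k. wt S k = w}"
  shows "Poly_Mapping.keys (l ^ e) \<subseteq> {k. wt S k = e * w}"
proof (induction e)
  case 0
  then show ?case by simp
next
  case (Suc e)
  have "Poly_Mapping.keys (l ^ Suc e) \<subseteq> {a + b | a b. a \<in> Poly_Mapping.keys l \<and> b \<in> Poly_Mapping.keys (l ^ e)}"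
    using keys_mult[of l "l ^ e"] by simp
  also have "\<dots> \<subseteq> {k. wt S k = Suc e * w}"
  proof
    fix x assume "x \<in> {a + b | a b. a \<in> Poly_Mapping.keys l \<and> b \<in> Poly_Mapping.keys (l ^ e)}"
    then obtain a b where ab: "x = a + b" "a \<in> Poly_Mapping.keys l" "b \<in> Poly_Mapping.keys (l ^ e)" by blast
    have "wt S a = w" using assms ab(2) by blast
    moreover have "wt S b = e * w" using Suc.IH ab(3) by blast
    ultimately show "x \<in> {k. wt S k = Suc e * w}" using ab(1) by (simp add: wt_add)
  qed
  finally show ?case .
qed

definition sig_psi :: "(nat \<Rightarrow> 'a::comm_ring_1 mpoly) \<Rightarrow> nat \<Rightarrow> (nat \<Rightarrow>\<^sub>0 nat) \<Rightarrow> (nat \<Rightarrow>\<^sub>0 nat) \<Rightarrow> 'a" where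
  "sig_psi l n t k = Poly_Mapping.lookup (\<Prod>j<n. l j ^ Poly_Mapping.lookup k j) t"

lemma sig_lin:
  assumes "(\<Sum>j<n. l j) = 0"
  shows "(\<Sum>j<n. sig_psi l n t (u + Poly_Mapping.single j 1)) = 0"
proof -
  have step: "(\<Prod>i<n. l i ^ Poly_Mapping.lookup (u + Poly_Mapping.single j 1) i) = l j * (\<Prod>i<n. l i ^ Poly_Mapping.lookup u i)"
    if j: "j < n" for j
  proof -
    have "(\<Prod>i<n. l i ^ Poly_Mapping.lookup (u + Poly_Mapping.single j 1) i)
        = (\<Prod>i<n. l i ^ Poly_Mapping.lookup u i * (if i = j then l i else 1))"
      by (rule prod.cong) (auto simp: lookup_add lookup_single when_def)
    also have "\<dots> = (\<Prod>i<n. l i ^ Poly_Mapping.lookup u i) * (\<Prod>i<n. if i = j then l i else 1)"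
      by (rule prod.distrib)
    also have "(\<Prod>i<n. if i = j then l i else 1) = l j" using j by (simp add: prod.delta)
    finally show ?thesis by (simp add: mult.commute)
  qed
  have "(\<Sum>j<n. sig_psi l n t (u + Poly_Mapping.single j 1)) =
      Poly_Mapping.lookup (\<Sum>j<n. l j * (\<Prod>i<n. l i ^ Poly_Mapping.lookup u i)) t"
    unfolding sig_psi_def lookup_sum
  proof (rule sum.cong[OF refl])
    fix j assume "j \<in> {..<n}"
    thus "Poly_Mapping.lookup (\<Prod>i<n. l i ^ Poly_Mapping.lookup (u + Poly_Mapping.single j 1) i) t =
        Poly_Mapping.lookup (l j * (\<Prod>i<n. l i ^ Poly_Mapping.lookup u i)) t"
      using step[of j] by simp
  qed
  also have "\<dots> = 0" using assms by (simp add: sum_distrib_right[symmetric])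
  finally show ?thesis .
qed

lemma sig_van:
  assumes j0: "j0 < n" and kl: "Poly_Mapping.keys (l j0) \<subseteq> {k. wt S k = 1}"
    and lt: "wt S t < Poly_Mapping.lookup m j0"
  shows "sig_psi l n t (c + m) = 0"
proof -
  let ?e = "Poly_Mapping.lookup (c + m) j0"
  have "(\<Prod>j<n. l j ^ Poly_Mapping.lookup (c + m) j) = l j0 ^ ?e * (\<Prod>j\<in>{..<n} - {j0}. l j ^ Poly_Mapping.lookup (c + m) j)"
    using j0 by (simp add: prod.remove)
  moreover have "t \<notin> Poly_Mapping.keys (l j0 ^ ?e * (\<Prod>j\<in>{..<n} - {j0}. l j ^ Poly_Mapping.lookup (c + m) j))"
  proof
    assume "t \<in> Poly_Mapping.keys (l j0 ^ ?e * (\<Prod>j\<in>{..<n} - {j0}. l j ^ Poly_Mapping.lookup (c + m) j))"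
    then obtain a b where ab: "t = a + b" "a \<in> Poly_Mapping.keys (l j0 ^ ?e)"
      using keys_mult by blast
    have "wt S a = ?e * 1" using keys_power_wt[OF kl, of ?e] ab(2) by auto
    hence "wt S t \<ge> ?e" using ab(1) by (simp add: wt_add)
    moreover have "?e \<ge> Poly_Mapping.lookup m j0" by (simp add: lookup_add)
    ultimately show False using lt by simp
  qed
  ultimately show ?thesis unfolding sig_psi_def by (simp add: in_keys_iff)
qed



lemma var_pow: "(var i :: 'a::comm_ring_1 mpoly) ^ k = Poly_Mapping.single (Poly_Mapping.single i k) 1"
proof (induction k)
  case 0
  then show ?case by simp
next
  case (Suc k)
  have "(var i :: 'a mpoly) ^ Suc k = var i * var i ^ k" by simp
  also have "\<dots> = Poly_Mapping.single (Poly_Mapping.single i 1 + Poly_Mapping.single i k) 1"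
    using Suc by (simp add: var_def mult_single)
  also have "Poly_Mapping.single i 1 + Poly_Mapping.single i k = Poly_Mapping.single i (Suc k)"
    by (simp add: single_add[symmetric])
  finally show ?case .
qed

lemma keys_var: "Poly_Mapping.keys (var i :: 'a::comm_ring_1 mpoly) = {Poly_Mapping.single i 1}"
  by (simp add: var_def)

lemma wt_single: "finite S \<Longrightarrow> wt S (Poly_Mapping.single i k) = (if i \<in> S then k else 0)"
  unfolding wt_def by (simp add: lookup_single when_def)

lemma pm_eq_lookup: "(a :: nat \<Rightarrow>\<^sub>0 nat) = b \<longleftrightarrow> (\<forall>j. Poly_Mapping.lookup a j = Poly_Mapping.lookup b j)"
  by (metis poly_mapping_eqI)

lemma X_diff_pow_lead:
  "Poly_Mapping.lookup (((var a - var b) :: 'a::comm_ring_1 mpoly) ^ k) (Poly_Mapping.single a k) = 1"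
  if "a \<noteq> b"
proof (induction k)
  case 0
  then show ?case by simp
next
  case (Suc k)
  let ?B = "((var a - var b) :: 'a mpoly) ^ k"
  have e: "((var a - var b) :: 'a mpoly) ^ Suc k = ?B * Poly_Mapping.single (Poly_Mapping.single a 1) 1 - ?B * Poly_Mapping.single (Poly_Mapping.single b 1) 1"
    unfolding power_Suc2 var_def by (rule right_diff_distrib)
  have "Poly_Mapping.single a (Suc k) = Poly_Mapping.single a k + Poly_Mapping.single a 1"
    by (simp add: single_add[symmetric])
  hence 1: "Poly_Mapping.lookup (?B * Poly_Mapping.single (Poly_Mapping.single a 1) 1) (Poly_Mapping.single a (Suc k)) = 1"
    using lookup_mult_single_shift[of ?B "Poly_Mapping.single a 1" 1 "Poly_Mapping.single a k"] Suc by simp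
  have "\<not> (\<exists>y. Poly_Mapping.single a (Suc k) = y + Poly_Mapping.single b 1)"
  proof
    assume "\<exists>y. Poly_Mapping.single a (Suc k) = y + Poly_Mapping.single b 1"
    then obtain y where "Poly_Mapping.single a (Suc k) = y + Poly_Mapping.single b 1" by blast
    hence "Poly_Mapping.lookup (Poly_Mapping.single a (Suc k)) b = Poly_Mapping.lookup (y + Poly_Mapping.single b 1) b" by simp
    thus False using that by (simp add: lookup_add lookup_single when_def)
  qed
  hence 2: "Poly_Mapping.lookup (?B * Poly_Mapping.single (Poly_Mapping.single b 1) 1) (Poly_Mapping.single a (Suc k)) = 0"
    by (rule lookup_mult_single_none)
  show ?case unfolding e lookup_minus using 1 2 by simp
qed

lemma X_diff_pow_sub:
  "Poly_Mapping.lookup (((var a - var b) :: 'a::comm_ring_1 mpoly) ^ k) (Poly_Mapping.single a (k - 1) + Poly_Mapping.single b 1) = - of_nat k"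
  if ab: "a \<noteq> b"
proof (induction k)
  case 0
  have "Poly_Mapping.single b (1::nat) \<noteq> 0" by (metis lookup_single_eq lookup_zero one_neq_zero)
  then show ?case by (simp add: lookup_one when_def)
next
  case (Suc k)
  let ?B = "((var a - var b) :: 'a mpoly) ^ k"
  have e: "((var a - var b) :: 'a mpoly) ^ Suc k = ?B * Poly_Mapping.single (Poly_Mapping.single a 1) 1 - ?B * Poly_Mapping.single (Poly_Mapping.single b 1) 1"
    unfolding power_Suc2 var_def by (rule right_diff_distrib)
  have 2: "Poly_Mapping.lookup (?B * Poly_Mapping.single (Poly_Mapping.single b 1) 1) (Poly_Mapping.single a k + Poly_Mapping.single b 1) = 1"
    using lookup_mult_single_shift[of ?B "Poly_Mapping.single b 1" 1 "Poly_Mapping.single a k"] X_diff_pow_lead[OF ab, of k] by simp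
  have 1: "Poly_Mapping.lookup (?B * Poly_Mapping.single (Poly_Mapping.single a 1) 1) (Poly_Mapping.single a k + Poly_Mapping.single b 1) = - of_nat k"
  proof (cases k)
    case 0
    have "\<not> (\<exists>y. Poly_Mapping.single a k + Poly_Mapping.single b 1 = y + Poly_Mapping.single a 1)"
    proof
      assume "\<exists>y. Poly_Mapping.single a k + Poly_Mapping.single b 1 = y + Poly_Mapping.single a 1"
      then obtain y where "Poly_Mapping.single a k + Poly_Mapping.single b 1 = y + Poly_Mapping.single a 1" by blast
      hence "Poly_Mapping.lookup (Poly_Mapping.single a k + Poly_Mapping.single b 1) a = Poly_Mapping.lookup (y + Poly_Mapping.single a 1) a" by simp
      thus False using ab 0 by (simp add: lookup_add lookup_single when_def)
    qed
    hence "Poly_Mapping.lookup (?B * Poly_Mapping.single (Poly_Mapping.single a 1) 1) (Poly_Mapping.single a k + Poly_Mapping.single b 1) = 0"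
      by (rule lookup_mult_single_none)
    then show ?thesis using 0 by simp
  next
    case (Suc k')
    have "Poly_Mapping.single a k + Poly_Mapping.single b 1 = (Poly_Mapping.single a (k - 1) + Poly_Mapping.single b 1) + Poly_Mapping.single a 1"
      using Suc by (simp add: pm_eq_lookup lookup_add lookup_single when_def)
    then show ?thesis
      using lookup_mult_single_shift[of ?B "Poly_Mapping.single a 1" 1 "Poly_Mapping.single a (k - 1) + Poly_Mapping.single b 1"] Suc.IH
      by simp
  qed
  show ?case unfolding e lookup_minus using 1 2 by simp
qed



definition gensM :: "nat \<Rightarrow> nat \<Rightarrow> (nat \<Rightarrow>\<^sub>0 nat) set" where
  "gensM n d = (\<lambda>j. Poly_Mapping.single j d) ` {..<n} \<union>
     (\<lambda>j. Poly_Mapping.single 2 (d - 1) + Poly_Mapping.single j 1) ` ({..<n} - {2, 3})"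

lemma gensM_finite: "finite (gensM n d)" unfolding gensM_def by auto

lemma keys_single_sub: "Poly_Mapping.keys (Poly_Mapping.single j (k::nat)) \<subseteq> {j}" by simp

lemma gensM_keys_deg:
  assumes "m \<in> gensM n d" "5 \<le> n" "2 \<le> d"
  shows "Poly_Mapping.keys m \<subseteq> {..<n} \<and> mdeg m = d"
  using assms unfolding gensM_def
  by (auto simp: keys_add_nat mdeg_add split: if_splits)

lemma gensM_anti:
  assumes "m \<in> gensM n d" "m' \<in> gensM n d" "m' = c + m" "5 \<le> n" "2 \<le> d"
  shows "m' = m"
proof -
  have "mdeg m' = mdeg c + mdeg m" using assms(3) by (simp add: mdeg_add)
  hence "mdeg c = 0" using gensM_keys_deg[OF assms(1,4,5)] gensM_keys_deg[OF assms(2,4,5)] by simp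
  thus ?thesis using assms(3) by (simp add: mdeg_zero_iff)
qed

lemma gensM_card:
  assumes "5 \<le> n" "2 \<le> d"
  shows "card (gensM n d) = 2 * n - 2"
proof -
  let ?A = "(\<lambda>j. Poly_Mapping.single j d) ` {..<n}"
  let ?B = "(\<lambda>j. Poly_Mapping.single 2 (d - 1) + Poly_Mapping.single j 1) ` ({..<n} - {2, 3::nat})"
  have injA: "inj_on (\<lambda>j. Poly_Mapping.single j d) {..<n}"
  proof (rule inj_onI)
    fix x y assume "Poly_Mapping.single x d = Poly_Mapping.single y d"
    hence "Poly_Mapping.lookup (Poly_Mapping.single x d) x = Poly_Mapping.lookup (Poly_Mapping.single y d) x" by simp
    thus "x = y" using assms by (simp add: lookup_single when_def split: if_splits)
  qed
  have injB: "inj_on (\<lambda>j. Poly_Mapping.single 2 (d - 1) + Poly_Mapping.single j 1) ({..<n} - {2, 3::nat})"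
  proof (rule inj_onI)
    fix x y assume xy: "x \<in> {..<n} - {2, 3::nat}" "y \<in> {..<n} - {2, 3::nat}"
      and e: "Poly_Mapping.single 2 (d - 1) + Poly_Mapping.single x 1 = Poly_Mapping.single 2 (d - 1) + Poly_Mapping.single y (1::nat)"
    hence "Poly_Mapping.lookup (Poly_Mapping.single 2 (d - 1) + Poly_Mapping.single x 1) x = Poly_Mapping.lookup (Poly_Mapping.single 2 (d - 1) + Poly_Mapping.single y (1::nat)) x" by simp
    thus "x = y" using xy by (simp add: lookup_add lookup_single when_def split: if_splits)
  qed
  have disj: "?A \<inter> ?B = {}"
  proof (rule ccontr)
    assume "?A \<inter> ?B \<noteq> {}"
    then obtain x y where xy: "x < n" "y \<in> {..<n} - {2, 3::nat}"
      and e: "Poly_Mapping.single x d = Poly_Mapping.single 2 (d - 1) + Poly_Mapping.single y (1::nat)" by auto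
    hence "Poly_Mapping.lookup (Poly_Mapping.single x d) 2 = Poly_Mapping.lookup (Poly_Mapping.single 2 (d - 1) + Poly_Mapping.single y (1::nat)) 2" by simp
    thus False using xy assms by (simp add: lookup_add lookup_single when_def split: if_splits)
  qed
  have "card (gensM n d) = card ?A + card ?B"
    unfolding gensM_def by (rule card_Un_disjoint) (use disj in auto)
  also have "card ?A = n" using card_image[OF injA] by simp
  also have "card ?B = n - 2"
  proof -
    have "card ?B = card ({..<n} - {2, 3::nat})" by (rule card_image[OF injB])
    also have "\<dots> = n - 2" using assms by (subst card_Diff_subset) auto
    finally show ?thesis .
  qed
  finally show ?thesis using assms by simp
qed

definition socle_u :: "nat \<Rightarrow> (nat \<Rightarrow>\<^sub>0 nat)" where
  "socle_u d = Poly_Mapping.single 2 (d - 1) + Poly_Mapping.single 3 (d - 1)"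

lemma socle_props:
  assumes n: "5 \<le> n" and d: "2 \<le> d"
  shows "Poly_Mapping.keys (socle_u d) \<subseteq> {..<n}" "mdeg (socle_u d) = 2 * d - 2"
    "\<not> (\<exists>m\<in>gensM n d. \<exists>c. socle_u d = c + m)"
    "\<forall>j<n. \<exists>m\<in>gensM n d. \<exists>c. socle_u d + Poly_Mapping.single j 1 = c + m"
proof -
  show "Poly_Mapping.keys (socle_u d) \<subseteq> {..<n}" using n by (auto simp: socle_u_def keys_add_nat split: if_splits)
  show "mdeg (socle_u d) = 2 * d - 2" using d by (simp add: socle_u_def mdeg_add)
  show "\<not> (\<exists>m\<in>gensM n d. \<exists>c. socle_u d = c + m)"
  proof
    assume "\<exists>m\<in>gensM n d. \<exists>c. socle_u d = c + m"
    then obtain m c where m: "m \<in> gensM n d" and e: "socle_u d = c + m" by blast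
    from m consider (A) j where "j < n" "m = Poly_Mapping.single j d"
      | (B) j where "j \<in> {..<n} - {2,3}" "m = Poly_Mapping.single 2 (d - 1) + Poly_Mapping.single j 1"
      unfolding gensM_def by blast
    then show False
    proof cases
      case (A j)
      have "Poly_Mapping.lookup (socle_u d) j = Poly_Mapping.lookup (c + m) j" using e by simp
      thus False using A d by (auto simp: socle_u_def lookup_add lookup_single when_def split: if_splits)
    next
      case (B j)
      have "Poly_Mapping.lookup (socle_u d) j = Poly_Mapping.lookup (c + m) j" using e by simp
      thus False using B d by (auto simp: socle_u_def lookup_add lookup_single when_def split: if_splits)
    qed
  qed
  show "\<forall>j<n. \<exists>m\<in>gensM n d. \<exists>c. socle_u d + Poly_Mapping.single j 1 = c + m"
  proof (intro allI impI)
    fix j assume j: "j < n"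
    show "\<exists>m\<in>gensM n d. \<exists>c. socle_u d + Poly_Mapping.single j 1 = c + m"
    proof (cases "j = 2 \<or> j = 3")
      case True
      hence "Poly_Mapping.single j d \<in> gensM n d" using j unfolding gensM_def by auto
      moreover have "socle_u d + Poly_Mapping.single j 1 = Poly_Mapping.single (5 - j) (d - 1) + Poly_Mapping.single j d"
        using True d by (auto simp: socle_u_def pm_eq_lookup lookup_add lookup_single when_def)
      ultimately show ?thesis by blast
    next
      case False
      hence "Poly_Mapping.single 2 (d - 1) + Poly_Mapping.single j 1 \<in> gensM n d" using j unfolding gensM_def by auto
      moreover have "socle_u d + Poly_Mapping.single j 1 = Poly_Mapping.single 3 (d - 1) + (Poly_Mapping.single 2 (d - 1) + Poly_Mapping.single j 1)"
        by (simp add: socle_u_def ac_simps)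
      ultimately show ?thesis by blast
    qed
  qed
qed

lemma finite_box: "finite {m :: nat \<Rightarrow>\<^sub>0 nat. Poly_Mapping.keys m \<subseteq> {..<n} \<and> (\<forall>j. Poly_Mapping.lookup m j < d)}"
  (is "finite ?Box")
proof -
  let ?f = "\<lambda>m :: nat \<Rightarrow>\<^sub>0 nat. restrict (Poly_Mapping.lookup m) {..<n}"
  have "inj_on ?f ?Box"
  proof (rule inj_onI)
    fix x y assume x: "x \<in> ?Box" and y: "y \<in> ?Box" and e: "?f x = ?f y"
    show "x = y"
    proof (rule poly_mapping_eqI)
      fix j
      show "Poly_Mapping.lookup x j = Poly_Mapping.lookup y j"
      proof (cases "j < n")
        case True
        have "restrict (Poly_Mapping.lookup x) {..<n} j = restrict (Poly_Mapping.lookup y) {..<n} j"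
          using e by simp
        then show ?thesis using True by simp
      next
        case False
        then have "j \<notin> Poly_Mapping.keys x" "j \<notin> Poly_Mapping.keys y" using x y by auto
        then show ?thesis by (simp add: in_keys_iff)
      qed
    qed
  qed
  moreover have "?f ` ?Box \<subseteq> PiE {..<n} (\<lambda>_. {..<d})" by (auto simp: PiE_def extensional_def)
  moreover have "finite (PiE {..<n} (\<lambda>_. {..<d}))" by (rule finite_PiE) auto
  ultimately show ?thesis by (meson finite_imageD finite_subset)
qed

lemma gensM_artinian:
  assumes n: "5 \<le> n" and d: "2 \<le> d"
  shows "artinian_quot n (ideal_gen n (monom ` gensM n d :: 'a::field mpoly set))"
proof -
  let ?Box = "{m :: nat \<Rightarrow>\<^sub>0 nat. Poly_Mapping.keys m \<subseteq> {..<n} \<and> (\<forall>j. Poly_Mapping.lookup m j < d)}"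
  let ?B = "monom ` ?Box :: 'a mpoly set"
  have inj: "inj_on (monom :: _ \<Rightarrow> 'a mpoly) ?Box" by (auto simp: inj_on_def monom_inj)
  have "finite ?B" using finite_box by auto
  moreover have "?B \<subseteq> polyS n" unfolding polyS_def by auto
  moreover have "\<forall>p\<in>polyS n. \<exists>c. p - (\<Sum>b\<in>?B. const (c b) * b) \<in> ideal_gen n (monom ` gensM n d)"
  proof
    fix p :: "'a mpoly" assume p: "p \<in> polyS n"
    define c where "c b = (\<Sum>k\<in>Poly_Mapping.keys b. Poly_Mapping.lookup p k)" for b :: "'a mpoly"
    have "(\<Sum>b\<in>?B. const (c b) * b) = (\<Sum>m\<in>?Box. const (c (monom m)) * monom m)"
      by (simp add: sum.reindex[OF inj])
    also have "\<dots> = (\<Sum>m\<in>?Box. Poly_Mapping.single m (Poly_Mapping.lookup p m))"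
      by (simp add: c_def const_def monom_def mult_single)
    finally have S: "(\<Sum>b\<in>?B. const (c b) * b) = (\<Sum>m\<in>?Box. Poly_Mapping.single m (Poly_Mapping.lookup p m))" .
    let ?q = "p - (\<Sum>b\<in>?B. const (c b) * b)"
    have lq: "Poly_Mapping.lookup ?q k = (if k \<in> ?Box then 0 else Poly_Mapping.lookup p k)" for k
      unfolding S lookup_minus lookup_sum using finite_box[of n d]
      by (simp add: lookup_single when_def sum.delta)
    have kq: "Poly_Mapping.keys ?q \<subseteq> Poly_Mapping.keys p" using lq by (auto simp: in_keys_iff split: if_splits)
    have "?q \<in> polyS n" using p kq unfolding polyS_def by blast
    moreover have "\<forall>k\<in>Poly_Mapping.keys ?q. \<exists>m\<in>gensM n d. \<exists>c. k = c + m"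
    proof
      fix k assume k: "k \<in> Poly_Mapping.keys ?q"
      hence kB: "k \<notin> ?Box" using lq by (auto simp: in_keys_iff split: if_splits)
      have kn: "Poly_Mapping.keys k \<subseteq> {..<n}" using k kq p unfolding polyS_def by blast
      then obtain j where j: "Poly_Mapping.lookup k j \<ge> d" using kB not_less by blast
      hence "j \<in> Poly_Mapping.keys k" using d by (auto simp: in_keys_iff)
      hence jn: "j < n" using kn by auto
      have "k = (k - Poly_Mapping.single j d) + Poly_Mapping.single j d"
        using j by (simp add: pm_eq_lookup lookup_add lookup_minus lookup_single when_def)
      moreover have "Poly_Mapping.single j d \<in> gensM n d" using jn unfolding gensM_def by auto
      ultimately show "\<exists>m\<in>gensM n d. \<exists>c. k = c + m" by blast
    qed
    ultimately have "?q \<in> ideal_gen n (monom ` gensM n d)" by (intro ideal_mem gensM_finite)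
    thus "\<exists>c. p - (\<Sum>b\<in>?B. const (c b) * b) \<in> ideal_gen n (monom ` gensM n d)" by blast
  qed
  ultimately show ?thesis unfolding artinian_quot_def by blast
qed



definition good_psi :: "nat \<Rightarrow> nat \<Rightarrow> ((nat \<Rightarrow>\<^sub>0 nat) \<Rightarrow> 'a::field) \<Rightarrow> bool" where
  "good_psi n d \<psi> \<longleftrightarrow> (\<forall>m\<in>gensM n d. \<forall>c. \<psi> (c + m) = 0) \<and>
     (\<forall>u. (\<Sum>j<n. \<psi> (u + Poly_Mapping.single j 1)) = 0) \<and>
     (\<exists>g0. Poly_Mapping.keys g0 \<subseteq> {..<n} \<and> mdeg g0 = Suc (2 * d - 2) \<and> \<psi> g0 \<noteq> 0)"

lemma sig_good:
  fixes l :: "nat \<Rightarrow> 'a::field mpoly"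
  assumes sum0: "(\<Sum>j<n. l j) = 0"
    and kl: "\<And>j. Poly_Mapping.keys (l j) \<subseteq> {k. wt (S j) k = 1}"
    and wS: "\<And>j. wt (S j) t < d" and w2: "wt (S 2) t < d - 1" and n: "2 < n"
    and g0: "Poly_Mapping.keys g0 \<subseteq> {..<n}" "mdeg g0 = Suc (2 * d - 2)" "sig_psi l n t g0 \<noteq> 0"
  shows "good_psi n d (sig_psi l n t)"
  unfolding good_psi_def
proof (intro conjI)
  show "\<forall>m\<in>gensM n d. \<forall>c. sig_psi l n t (c + m) = 0"
  proof (intro ballI allI)
    fix m c assume m: "m \<in> gensM n d"
    from m consider (A) j where "j < n" "m = Poly_Mapping.single j d"
      | (B) j where "j \<in> {..<n} - {2,3}" "m = Poly_Mapping.single 2 (d - 1) + Poly_Mapping.single j 1"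
      unfolding gensM_def by blast
    then show "sig_psi l n t (c + m) = 0"
    proof cases
      case (A j)
      show ?thesis by (rule sig_van[OF A(1) kl]) (use wS A in simp)
    next
      case (B j)
      have "Poly_Mapping.lookup m 2 = d - 1" using B by (simp add: lookup_add lookup_single when_def)
      thus ?thesis using w2 by (intro sig_van[OF n kl]) simp
    qed
  qed
  show "\<forall>u. (\<Sum>j<n. sig_psi l n t (u + Poly_Mapping.single j 1)) = 0"
    using sig_lin[OF sum0] by blast
  show "\<exists>g0. Poly_Mapping.keys g0 \<subseteq> {..<n} \<and> mdeg g0 = Suc (2 * d - 2) \<and> sig_psi l n t g0 \<noteq> 0"
    using g0 by blast
qed

lemma keys_var_wt: "Poly_Mapping.keys (var a :: 'a::comm_ring_1 mpoly) \<subseteq> {k. wt {a} k = 1}"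
  by (simp add: keys_var wt_single)

lemma keys_nvar_wt: "Poly_Mapping.keys (- var a :: 'a::comm_ring_1 mpoly) \<subseteq> {k. wt {a} k = 1}"
  by (simp add: keys_var wt_single)

lemma keys_vdiff_wt: "a \<noteq> b \<Longrightarrow> Poly_Mapping.keys (var a - var b :: 'a::comm_ring_1 mpoly) \<subseteq> {k. wt {a, b} k = 1}"
  using keys_diff[of "var a :: 'a mpoly" "var b"] by (auto simp: keys_var wt_single)

lemma sig_psi_prod_reduce:
  assumes "finite T" "T \<subseteq> {..<n}" "\<And>j. j \<notin> T \<Longrightarrow> Poly_Mapping.lookup g j = 0"
  shows "sig_psi l n t g = Poly_Mapping.lookup (\<Prod>j\<in>T. l j ^ Poly_Mapping.lookup g j) t"
proof -
  have "(\<Prod>j<n. l j ^ Poly_Mapping.lookup g j) = (\<Prod>j\<in>T. l j ^ Poly_Mapping.lookup g j)"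
    by (rule prod.mono_neutral_right) (use assms in auto)
  thus ?thesis unfolding sig_psi_def by simp
qed

lemma pairs_good:
  assumes n: "6 \<le> n" "p < n" and p: "p \<notin> {0,1,3,4,5}" and pd: "p = 2 \<longrightarrow> 3 \<le> d" and d: "2 \<le> d"
  shows "\<exists>\<psi> :: (nat \<Rightarrow>\<^sub>0 nat) \<Rightarrow> 'a::field_char_0. good_psi n d \<psi>"
proof -
  define l :: "nat \<Rightarrow> 'a mpoly" where "l j = (if j = 0 then var 1 else if j = 1 then - var 1
      else if j = 3 then var 0 else if j = p then - var 0 else if j = 4 then var 2
      else if j = 5 then - var 2 else 0)" for j
  define S :: "nat \<Rightarrow> nat set" where "S j = (if j = 0 \<or> j = 1 then {1} else if j = 3 \<or> j = p then {0}
      else if j = 4 \<or> j = 5 then {2} else {})" for j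
  define t :: "nat \<Rightarrow>\<^sub>0 nat" where "t = Poly_Mapping.single 0 1 + Poly_Mapping.single 1 (d - 1) + Poly_Mapping.single 2 (d - 1)"
  define g0 :: "nat \<Rightarrow>\<^sub>0 nat" where "g0 = Poly_Mapping.single 3 1 + Poly_Mapping.single 0 (d - 1) + Poly_Mapping.single 4 (d - 1)"
  have fS: "finite (S j)" for j by (simp add: S_def)
  have sum0: "(\<Sum>j<n. l j) = 0"
  proof -
    have "(\<Sum>j<n. l j) = (\<Sum>j\<in>{0,1,3,4,5,p}. l j)"
      by (rule sum.mono_neutral_right) (use n in \<open>auto simp: l_def\<close>)
    also have "\<dots> = 0" using p by (simp add: l_def)
    finally show ?thesis .
  qed
  have kl: "Poly_Mapping.keys (l j) \<subseteq> {k. wt (S j) k = 1}" for j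
    using keys_var_wt[of 1] keys_nvar_wt[of 1] keys_var_wt[of 0] keys_nvar_wt[of 0]
      keys_var_wt[of 2] keys_nvar_wt[of 2] p
    by (auto simp: l_def S_def)
  have wS: "wt (S j) t < d" for j
    using d p by (auto simp: S_def t_def wt_add wt_single)
  have w2: "wt (S 2) t < d - 1"
    using d p pd by (cases "p = 2") (auto simp: S_def t_def wt_add wt_single)
  have g0k: "Poly_Mapping.keys g0 \<subseteq> {..<n}" using n by (auto simp: g0_def keys_add_nat split: if_splits)
  have g0d: "mdeg g0 = Suc (2 * d - 2)" using d by (simp add: g0_def mdeg_add)
  have "sig_psi l n t g0 = Poly_Mapping.lookup (\<Prod>j\<in>{0,3,4}. l j ^ Poly_Mapping.lookup g0 j) t"
    by (rule sig_psi_prod_reduce) (use n in \<open>auto simp: g0_def lookup_add lookup_single when_def\<close>)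
  also have "(\<Prod>j\<in>{0,3,4}. l j ^ Poly_Mapping.lookup g0 j) = var 1 ^ (d - 1) * (var 0 ^ 1 * var 2 ^ (d - 1))"
    using p by (simp add: l_def g0_def lookup_add lookup_single when_def)
  also have "\<dots> = Poly_Mapping.single t 1"
    unfolding var_pow by (simp add: mult_single t_def ac_simps)
  finally have "sig_psi l n t g0 = 1" by simp
  hence "good_psi n d (sig_psi l n t)"
    using sig_good[OF sum0 kl wS w2 _ g0k g0d] n by simp
  thus ?thesis by blast
qed

lemma tri_good:
  assumes n: "5 \<le> n" and d: "4 \<le> d"
  shows "\<exists>\<psi> :: (nat \<Rightarrow>\<^sub>0 nat) \<Rightarrow> 'a::field_char_0. good_psi n d \<psi>"
proof -
  define l :: "nat \<Rightarrow> 'a mpoly" where "l j = (if j = 0 then var 0 - var 2 else if j = 1 then var 1 - var 0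
      else if j = 2 then var 2 - var 1 else if j = 3 then var 3 else if j = 4 then - var 3 else 0)" for j
  define S :: "nat \<Rightarrow> nat set" where "S j = (if j = 0 then {0,2} else if j = 1 then {1,0}
      else if j = 2 then {2,1} else if j = 3 \<or> j = 4 then {3} else {})" for j
  define t :: "nat \<Rightarrow>\<^sub>0 nat" where "t = Poly_Mapping.single 0 (d - 2) + Poly_Mapping.single 1 1 + Poly_Mapping.single 2 1 + Poly_Mapping.single 3 (d - 1)"
  define g0 :: "nat \<Rightarrow>\<^sub>0 nat" where "g0 = Poly_Mapping.single 0 (d - 1) + Poly_Mapping.single 1 1 + Poly_Mapping.single 3 (d - 1)"
  have sum0: "(\<Sum>j<n. l j) = 0"
  proof -
    have "(\<Sum>j<n. l j) = (\<Sum>j\<in>{0,1,2,3,4}. l j)"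
      by (rule sum.mono_neutral_right) (use n in \<open>auto simp: l_def\<close>)
    also have "\<dots> = 0" by (simp add: l_def)
    finally show ?thesis .
  qed
  have kl: "Poly_Mapping.keys (l j) \<subseteq> {k. wt (S j) k = 1}" for j
    using keys_vdiff_wt[of 0 2] keys_vdiff_wt[of 1 0] keys_vdiff_wt[of 2 1] keys_var_wt[of 3] keys_nvar_wt[of 3]
    by (auto simp: l_def S_def)
  have wS: "wt (S j) t < d" for j
    using d by (auto simp: S_def t_def wt_add wt_single)
  have w2: "wt (S 2) t < d - 1"
    using d by (auto simp: S_def t_def wt_add wt_single)
  have g0k: "Poly_Mapping.keys g0 \<subseteq> {..<n}" using n by (auto simp: g0_def keys_add_nat split: if_splits)
  have g0d: "mdeg g0 = Suc (2 * d - 2)" using d by (simp add: g0_def mdeg_add)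
  let ?A = "((var 0 - var 2) :: 'a mpoly) ^ (d - 1)"
  have "sig_psi l n t g0 = Poly_Mapping.lookup (\<Prod>j\<in>{0,1,3}. l j ^ Poly_Mapping.lookup g0 j) t"
    by (rule sig_psi_prod_reduce) (use n in \<open>auto simp: g0_def lookup_add lookup_single when_def\<close>)
  also have "(\<Prod>j\<in>{0,1,3}. l j ^ Poly_Mapping.lookup g0 j) = ?A * ((var 1 - var 0) * var 3 ^ (d - 1))"
    by (simp add: l_def g0_def lookup_add lookup_single when_def)
  also have "\<dots> = ?A * Poly_Mapping.single (Poly_Mapping.single 1 1 + Poly_Mapping.single 3 (d - 1)) 1
      - ?A * Poly_Mapping.single (Poly_Mapping.single 0 1 + Poly_Mapping.single 3 (d - 1)) 1"
  proof -
    have h: "((var 1 - var 0) * var 3 ^ (d - 1) :: 'a mpoly) = Poly_Mapping.single (Poly_Mapping.single 1 1 + Poly_Mapping.single 3 (d - 1)) 1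
      - Poly_Mapping.single (Poly_Mapping.single 0 1 + Poly_Mapping.single 3 (d - 1)) 1"
      unfolding var_pow by (simp add: var_def mult_single left_diff_distrib)
    show ?thesis by (simp only: h right_diff_distrib)
  qed
  finally have e: "sig_psi l n t g0 = Poly_Mapping.lookup (?A * Poly_Mapping.single (Poly_Mapping.single 1 1 + Poly_Mapping.single 3 (d - 1)) 1) t
      - Poly_Mapping.lookup (?A * Poly_Mapping.single (Poly_Mapping.single 0 1 + Poly_Mapping.single 3 (d - 1)) 1) t"
    by (simp add: lookup_minus)
  have t1: "t = (Poly_Mapping.single 0 (d - 1 - 1) + Poly_Mapping.single 2 1) + (Poly_Mapping.single 1 1 + Poly_Mapping.single 3 (d - 1))"
    using d by (simp add: t_def pm_eq_lookup lookup_add lookup_single when_def)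
  have v1: "Poly_Mapping.lookup (?A * Poly_Mapping.single (Poly_Mapping.single 1 1 + Poly_Mapping.single 3 (d - 1)) 1) t = - of_nat (d - 1)"
    unfolding t1 lookup_mult_single_shift using X_diff_pow_sub[of 0 2 "d - 1"] by simp
  have t2: "t = (Poly_Mapping.single 0 (d - 3) + Poly_Mapping.single 1 1 + Poly_Mapping.single 2 1) + (Poly_Mapping.single 0 1 + Poly_Mapping.single 3 (d - 1))"
    using d by (simp add: t_def pm_eq_lookup lookup_add lookup_single when_def)
  have "Poly_Mapping.keys ?A \<subseteq> {k. wt {1} k = (d - 1) * 0}"
    by (rule keys_power_wt) (use keys_diff[of "var 0 :: 'a mpoly" "var 2"] in \<open>auto simp: keys_var wt_single\<close>)
  moreover have "wt {1} (Poly_Mapping.single 0 (d - 3) + Poly_Mapping.single 1 1 + Poly_Mapping.single 2 1) = 1"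
    by (simp add: wt_add wt_single)
  ultimately have "Poly_Mapping.single 0 (d - 3) + Poly_Mapping.single 1 1 + Poly_Mapping.single 2 1 \<notin> Poly_Mapping.keys ?A"
    by auto
  hence v2: "Poly_Mapping.lookup (?A * Poly_Mapping.single (Poly_Mapping.single 0 1 + Poly_Mapping.single 3 (d - 1)) 1) t = 0"
    unfolding t2 lookup_mult_single_shift by (simp add: in_keys_iff)
  have "sig_psi l n t g0 = - of_nat (d - 1)" using e v1 v2 by simp
  moreover have "(of_nat (d - 1) :: 'a) \<noteq> 0" using d by simp
  ultimately have "sig_psi l n t g0 \<noteq> 0" by simp
  hence "good_psi n d (sig_psi l n t)"
    using sig_good[OF sum0 kl wS w2 _ g0k g0d] n by simp
  thus ?thesis by blast
qed


theorem lemma4p5: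
  fixes n d :: nat
  assumes "(n \<ge> 5 \<and> d \<ge> 4) \<or> (n \<ge> 6 \<and> d \<ge> 3) \<or> (n \<ge> 7 \<and> d \<ge> 2)"
  shows "\<exists>G :: 'a::field_char_0 mpoly set.
           G \<subseteq> {monom m | m. Poly_Mapping.keys m \<subseteq> {..<n} \<and> mdeg m = d}
         \<and> card G = 2 * n - 2
         \<and> (\<forall>H. finite H \<and> H \<subseteq> polyS n \<and> ideal_gen n H = ideal_gen n G \<longrightarrow> 2 * n - 2 \<le> card H)
         \<and> artinian_quot n (ideal_gen n G)
         \<and> fails_WLP_in_degree n (ideal_gen n G) (2 * d - 2)"
proof -
  have n5: "5 \<le> n" and d2: "2 \<le> d" using assms by auto
  have "\<exists>\<psi> :: (nat \<Rightarrow>\<^sub>0 nat) \<Rightarrow> 'a. good_psi n d \<psi>"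
  proof -
    consider (T) "5 \<le> n \<and> 4 \<le> d" | (P) "6 \<le> n \<and> 3 \<le> d" | (Q) "7 \<le> n \<and> 2 \<le> d" using assms by linarith
    then show ?thesis
    proof cases
      case T
      then show ?thesis using tri_good by blast
    next
      case P
      then show ?thesis using pairs_good[of n 2 d] by simp
    next
      case Q
      then show ?thesis using pairs_good[of n 6 d] by simp
    qed
  qed
  then obtain \<psi> :: "(nat \<Rightarrow>\<^sub>0 nat) \<Rightarrow> 'a" where good: "good_psi n d \<psi>" by blast
  let ?G = "monom ` gensM n d :: 'a mpoly set"
  have fM: "finite (gensM n d)" by (rule gensM_finite)
  have anti: "\<And>m m' c. m \<in> gensM n d \<Longrightarrow> m' \<in> gensM n d \<Longrightarrow> m' = c + m \<Longrightarrow> m' = m"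
    using gensM_anti n5 d2 by blast
  have inj: "inj_on (monom :: _ \<Rightarrow> 'a mpoly) (gensM n d)" by (auto simp: inj_on_def monom_inj)
  have cardG: "card ?G = 2 * n - 2"
    using card_image[OF inj] gensM_card[OF n5 d2] by simp
  have sub: "?G \<subseteq> {monom m | m. Poly_Mapping.keys m \<subseteq> {..<n} \<and> mdeg m = d}"
    using gensM_keys_deg[OF _ n5 d2] by blast
  have minimal: "\<forall>H. finite H \<and> H \<subseteq> polyS n \<and> ideal_gen n H = ideal_gen n ?G \<longrightarrow> 2 * n - 2 \<le> card H"
  proof (intro allI impI)
    fix H :: "'a mpoly set" assume H: "finite H \<and> H \<subseteq> polyS n \<and> ideal_gen n H = ideal_gen n ?G"
    have "card (gensM n d) \<le> card H"
      by (rule min_gens[OF fM anti]) (use H in auto)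
    thus "2 * n - 2 \<le> card H" using gensM_card[OF n5 d2] by simp
  qed
  have art: "artinian_quot n (ideal_gen n ?G)" by (rule gensM_artinian[OF n5 d2])
  have ninj: "\<not> mult_injective n (ideal_gen n ?G) (2 * d - 2)"
    using not_inj[OF fM socle_props(1,2,3,4)[OF n5 d2]] by blast
  have nsurj: "\<not> mult_surjective n (ideal_gen n ?G) (2 * d - 2)"
  proof -
    from good obtain g0 where van: "\<forall>m\<in>gensM n d. \<forall>c. \<psi> (c + m) = 0"
      and lin: "\<forall>u. (\<Sum>j<n. \<psi> (u + Poly_Mapping.single j 1)) = 0"
      and g0: "Poly_Mapping.keys g0 \<subseteq> {..<n}" "mdeg g0 = Suc (2 * d - 2)" "\<psi> g0 \<noteq> 0"
      unfolding good_psi_def by blast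
    show ?thesis by (rule not_surj[OF fM van _ g0]) (use lin in blast)
  qed
  show ?thesis
    by (intro exI[of _ ?G] conjI sub cardG minimal art)
       (simp add: fails_WLP_in_degree_def ninj nsurj)
qed

end
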